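(* For every constant $K>0$ there is a constant $C=C(K)$ such that for all integers $n\ge 2$ and all real $M$ with $1\le M\le K(\log n)^2$, $$\sum_{\substack{m\in\mathbb{Z}\\ M\le m\le n}} r(n,m)\le \frac{C\,n\log n}{M}.$$
   Context: Logarithms are natural. For positive integers $n,d$, the Euclidean algorithm sets $a_0=n$, $a_1=d$, and for $k\ge1$, as long as $a_k\ne0$, defines $a_{k+1}$ as the remainder of $a_{k-1}$ modulo $a_k$ and $q_k$ as the positive integer with $a_{k-1}=q_ka_k+a_{k+1}$; it stops at the first $\ell$ with $a_\ell=0$. The quotient sequence is $\mathbf{q}(n,d)=(q_1,\dots,q_{\ell-1})$. For integers $1\le m\le n$, $r(n,m)$ is the total number of occurrences of $m$ in the sequences $\mathbf{q}(n,d)$, summed over all $d\in\{1,\dots,n-1\}$ with $\gcd(n,d)=1$. *)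

theory Defs
  imports "HOL-Analysis.Analysis"
begin

fun quot_seq :: "nat \<Rightarrow> nat \<Rightarrow> nat list" where
  "quot_seq a b = (if b = 0 then [] else (a div b) # quot_seq b (a mod b))"

definition r :: "nat \<Rightarrow> nat \<Rightarrow> nat" where
  "r n m = (\<Sum>d\<in>{d. 1 \<le> d \<and> d \<le> n - 1 \<and> coprime n d}. count_list (quot_seq n d) m)"

end

theory Submission
  imports Defs "HOL-Analysis.Harmonic_Numbers"
begin

lemma card_mod_eq_le:
  fixes Y n c :: nat
  assumes "n > 0"
  shows "card {d\<in>{..<n}. Y*d mod n = c} \<le> gcd Y n"
proof -
  define g where "g = gcd Y n"
  define h where "h = n div g"
  have g0: "g > 0" using assms g_def by simp
  have ngh: "n = g * h" unfolding h_def g_def by simp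
  have h0: "h > 0" using ngh assms by (metis nat_0_less_mult_iff)
  have cop: "coprime h (Y div g)" unfolding h_def g_def
    by (metis assms div_gcd_coprime gcd.commute gr_implies_not0)
  have Yg: "Y = g * (Y div g)" unfolding g_def by simp
  have inj: "inj_on (\<lambda>d. d div h) {d\<in>{..<n}. Y*d mod n = c}"
  proof (rule inj_onI)
    fix d1 d2 assume d1: "d1 \<in> {d\<in>{..<n}. Y*d mod n = c}" and d2: "d2 \<in> {d\<in>{..<n}. Y*d mod n = c}"
      and eq: "d1 div h = d2 div h"
    have "int n dvd int Y * (int d1 - int d2)"
    proof -
      have "(int Y * int d1) mod int n = (int Y * int d2) mod int n"
        using d1 d2 by (metis (mono_tags, lifting) mem_Collect_eq of_nat_mod of_nat_mult)
      then show ?thesis by (metis mod_eq_dvd_iff right_diff_distrib)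
    qed
    then have "int g * int h dvd int g * (int (Y div g) * (int d1 - int d2))"
      using ngh Yg by (metis mult.assoc of_nat_mult)
    then have "int h dvd int (Y div g) * (int d1 - int d2)" using g0 by simp
    then have "int h dvd (int d1 - int d2)"
      using cop by (metis coprime_dvd_mult_right_iff coprime_int_iff)
    then have "d1 mod h = d2 mod h"
      by (metis mod_eq_dvd_iff of_nat_eq_iff zmod_int)
    then show "d1 = d2" using eq by (metis div_mult_mod_eq)
  qed
  have img: "(\<lambda>d. d div h) ` {d\<in>{..<n}. Y*d mod n = c} \<subseteq> {..<g}"
    using ngh h0 by (auto simp: div_less_iff_less_mult mult.commute)
  have "card {d\<in>{..<n}. Y*d mod n = c} \<le> card {..<g}"
    using card_inj_on_le[OF inj img] by simp
  then show ?thesis using g_def by simp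
qed

definition Good :: "nat \<Rightarrow> nat \<Rightarrow> real \<Rightarrow> nat set" where
  "Good n d M = {Y\<in>{1..n}. \<exists>b. 1 \<le> b \<and> b < n \<and> real b * M * real Y \<le> real n \<and>
     (Y*d mod n = b \<or> Y*d mod n = n - b)}"

lemma card_fixed_Y:
  fixes n Y :: nat and M :: real
  assumes "n > 0" "Y \<ge> 1" "M > 0"
  shows "real (card {d\<in>{1..n-1}. Y \<in> Good n d M}) \<le> 2 * real n / (M * real Y)"
proof -
  define g where "g = gcd Y n"
  define N where "N = nat \<lfloor>real n / (M * real Y)\<rfloor>"
  define B where "B = {b. 1 \<le> b \<and> b < n \<and> real b * M * real Y \<le> real n \<and> g dvd b}"
  have g0: "g > 0" using assms g_def by simp
  have gn: "g dvd n" "g dvd Y" unfolding g_def by auto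
  have sub: "{d\<in>{1..n-1}. Y \<in> Good n d M} \<subseteq>
     (\<Union>b\<in>B. {d\<in>{..<n}. Y*d mod n = b mod n} \<union> {d\<in>{..<n}. Y*d mod n = (n - b) mod n})"
  proof
    fix d assume "d \<in> {d\<in>{1..n-1}. Y \<in> Good n d M}"
    then obtain b where d: "d < n" and b: "1 \<le> b" "b < n" "real b * M * real Y \<le> real n"
       "Y*d mod n = b \<or> Y*d mod n = n - b"
      unfolding Good_def by auto
    have gr: "g dvd Y*d mod n" using gn by (simp add: dvd_mod)
    have "g dvd b"
    proof (cases "Y*d mod n = b")
      case True then show ?thesis using gr by simp
    next
      case False
      then have "g dvd n - b" using gr b by auto
      then have "g dvd n - (n - b)" using gn dvd_diff_nat by blast
      then show ?thesis using b by simp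
    qed
    then have "b \<in> B" using b B_def by auto
    moreover have "Y*d mod n = b mod n \<or> Y*d mod n = (n - b) mod n"
      using b by auto
    ultimately show "d \<in> (\<Union>b\<in>B. {d\<in>{..<n}. Y*d mod n = b mod n} \<union> {d\<in>{..<n}. Y*d mod n = (n - b) mod n})"
      using d by blast
  qed
  have finB: "finite B" unfolding B_def by auto
  have "card {d\<in>{1..n-1}. Y \<in> Good n d M} \<le> card (\<Union>b\<in>B. {d\<in>{..<n}. Y*d mod n = b mod n} \<union> {d\<in>{..<n}. Y*d mod n = (n - b) mod n})"
    by (rule card_mono[OF _ sub]) (use finB in auto)
  also have "\<dots> \<le> (\<Sum>b\<in>B. card ({d\<in>{..<n}. Y*d mod n = b mod n} \<union> {d\<in>{..<n}. Y*d mod n = (n - b) mod n}))"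
    by (rule card_UN_le[OF finB])
  also have "\<dots> \<le> (\<Sum>b\<in>B. 2 * g)"
  proof (rule sum_mono)
    fix b assume "b \<in> B"
    have "card ({d\<in>{..<n}. Y*d mod n = b mod n} \<union> {d\<in>{..<n}. Y*d mod n = (n - b) mod n})
       \<le> card {d\<in>{..<n}. Y*d mod n = b mod n} + card {d\<in>{..<n}. Y*d mod n = (n - b) mod n}"
      by (rule card_Un_le)
    also have "\<dots> \<le> g + g"
    proof -
      have "card {d\<in>{..<n}. Y*d mod n = b mod n} \<le> g" "card {d\<in>{..<n}. Y*d mod n = (n - b) mod n} \<le> g"
        unfolding g_def by (rule card_mod_eq_le[OF assms(1)])+
      then show ?thesis by linarith
    qed
    finally show "card ({d\<in>{..<n}. Y*d mod n = b mod n} \<union> {d\<in>{..<n}. Y*d mod n = (n - b) mod n}) \<le> 2 * g" by simp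
  qed
  also have "\<dots> = 2 * g * card B" by simp
  finally have c1: "card {d\<in>{1..n-1}. Y \<in> Good n d M} \<le> 2 * g * card B" .
  have cB: "card B \<le> N div g"
  proof -
    have inj: "inj_on (\<lambda>b. b div g) B"
    proof (rule inj_onI)
      fix x y assume "x \<in> B" "y \<in> B" "x div g = y div g"
      then have "g dvd x" "g dvd y" by (auto simp: B_def)
      then show "x = y" using \<open>x div g = y div g\<close> by (metis dvd_div_mult_self)
    qed
    have "(\<lambda>b. b div g) ` B \<subseteq> {1..N div g}"
    proof
      fix x assume "x \<in> (\<lambda>b. b div g) ` B"
      then obtain b where b: "b \<in> B" "x = b div g" by auto
      have "real b \<le> real n / (M * real Y)"
        using b assms by (auto simp: B_def field_simps)
      then have "b \<le> N" unfolding N_def by (simp add: le_nat_floor)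
      then have "b div g \<le> N div g" by (rule div_le_mono)
      moreover have "b div g \<ge> 1"
      proof -
        have "g dvd b" "b \<ge> 1" using b by (auto simp: B_def)
        then show ?thesis using g0 by (metis One_nat_def dvd_div_eq_0_iff leI less_one not_one_le_zero)
      qed
      ultimately show "x \<in> {1..N div g}" using b by auto
    qed
    then have "card B \<le> card {1..N div g}" by (intro card_inj_on_le[OF inj]) auto
    then show ?thesis by simp
  qed
  have "g * (N div g) \<le> N" by simp
  have NX: "real N \<le> real n / (M * real Y)"
    unfolding N_def using assms by (simp add: divide_nonneg_nonneg)
  have "card {d\<in>{1..n-1}. Y \<in> Good n d M} \<le> 2 * N"
  proof -
    have "2 * g * card B \<le> 2 * (g * (N div g))" using cB by simp
    also have "\<dots> \<le> 2 * N" by simp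
    finally show ?thesis using c1 by linarith
  qed
  then have "real (card {d\<in>{1..n-1}. Y \<in> Good n d M}) \<le> 2 * real N" by linarith
  also have "\<dots> \<le> 2 * real n / (M * real Y)" using NX by simp
  finally show ?thesis .
qed

lemma qs0[simp]: "quot_seq a 0 = []" by simp
lemma qsS: "b \<noteq> 0 \<Longrightarrow> quot_seq a b = (a div b) # quot_seq b (a mod b)" by simp
declare quot_seq.simps[simp del]

lemma abs_step:
  fixes y0 y1 q :: int
  assumes "y0 * y1 \<le> 0" "q \<ge> 0"
  shows "\<bar>y0 - q * y1\<bar> = \<bar>y0\<bar> + q * \<bar>y1\<bar>"
proof -
  have "(y0 \<ge> 0 \<and> y1 \<le> 0) \<or> (y0 \<le> 0 \<and> y1 \<ge> 0)" using assms(1) by (simp add: mult_le_0_iff)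
  then show ?thesis
  proof
    assume h: "y0 \<ge> 0 \<and> y1 \<le> 0"
    then have "q * y1 \<le> 0" using assms(2) by (simp add: mult_nonneg_nonpos)
    then show ?thesis using h assms(2) by (simp add: abs_of_nonneg abs_of_nonpos)
  next
    assume h: "y0 \<le> 0 \<and> y1 \<ge> 0"
    then have "q * y1 \<ge> 0" using assms(2) by simp
    then have "y0 - q * y1 \<le> 0" using h by linarith
    then show ?thesis using h assms(2) by (simp add: abs_of_nonneg abs_of_nonpos)
  qed
qed

lemma euclid_main:
  fixes n d :: nat and M :: real
  assumes M1: "M \<ge> 1"
  shows "b < a \<Longrightarrow> int n = \<bar>y1\<bar> * int a + \<bar>y0\<bar> * int b \<Longrightarrow> y0 * y1 \<le> 0 \<Longrightarrow> \<bar>y0\<bar> \<ge> 1 \<Longrightarrow> \<bar>y1\<bar> \<ge> 1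
    \<Longrightarrow> int n dvd int a - y0 * int d \<Longrightarrow> int n dvd int b - y1 * int d
    \<Longrightarrow> length (filter (\<lambda>q. M \<le> real q) (quot_seq a b)) \<le> card (Good n d M \<inter> {nat \<bar>y1\<bar>..n})"
proof (induction a b arbitrary: y0 y1 rule: quot_seq.induct)
  case (1 a b)
  show ?case
  proof (cases "b = 0")
    case True then show ?thesis by simp
  next
    case False
    define q where "q = a div b"
    define y2 where "y2 = y0 - int q * y1"
    have "0 < a div b" using False "1.prems"(1) by (simp add: div_greater_zero_iff)
    then have q1: "q \<ge> 1" using q_def by simp
    have y2abs: "\<bar>y2\<bar> = \<bar>y0\<bar> + int q * \<bar>y1\<bar>" unfolding y2_def by (rule abs_step) (use "1.prems" in auto)
    have "a = q * b + a mod b" unfolding q_def by simp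
    then have "int a = int (q * b + a mod b)" by simp
    then have ab: "int a = int q * int b + int (a mod b)" by simp
    have inv1: "int n = \<bar>y2\<bar> * int b + \<bar>y1\<bar> * int (a mod b)"
      using "1.prems"(2) y2abs ab by (simp add: algebra_simps)
    have inv2: "y1 * y2 \<le> 0"
    proof -
      have "y1 * y2 = y0 * y1 - int q * (y1 * y1)" unfolding y2_def by (simp add: algebra_simps)
      moreover have "int q * (y1 * y1) \<ge> 0" by simp
      ultimately show ?thesis using "1.prems"(3) by linarith
    qed
    have "int q * \<bar>y1\<bar> \<ge> 0" by simp
    then have inv3: "\<bar>y2\<bar> \<ge> 1" using y2abs "1.prems"(4) by linarith
    have inv4: "int n dvd int (a mod b) - y2 * int d"
    proof -
      have "int (a mod b) - y2 * int d = (int a - y0 * int d) - int q * (int b - y1 * int d)"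
        using ab unfolding y2_def by (simp add: algebra_simps)
      moreover have "int n dvd (int a - y0 * int d) - int q * (int b - y1 * int d)"
        using "1.prems"(6,7) dvd_mult[of "int n" "int b - y1 * int d" "int q"] dvd_diff by blast
      ultimately show ?thesis by simp
    qed
    have IH: "length (filter (\<lambda>q. M \<le> real q) (quot_seq b (a mod b))) \<le> card (Good n d M \<inter> {nat \<bar>y2\<bar>..n})"
      using "1.IH"[OF False _ inv1 inv2 "1.prems"(5) inv3 "1.prems"(7) inv4] False by simp
    have Ylt: "nat \<bar>y1\<bar> < nat \<bar>y2\<bar>"
    proof -
      have "int q * \<bar>y1\<bar> \<ge> \<bar>y1\<bar>" using q1 by (simp add: mult_le_cancel_right1)
      then show ?thesis using y2abs "1.prems"(4,5) by linarith
    qed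
    have sub: "Good n d M \<inter> {nat \<bar>y2\<bar>..n} \<subseteq> Good n d M \<inter> {nat \<bar>y1\<bar>..n}" using Ylt by auto
    have fin: "finite (Good n d M \<inter> {nat \<bar>y1\<bar>..n})" by simp
    have qsa: "quot_seq a b = q # quot_seq b (a mod b)" using qsS[OF False] q_def by simp
    show ?thesis
    proof (cases "M \<le> real q")
      case False
      then have "length (filter (\<lambda>q. M \<le> real q) (quot_seq a b)) = length (filter (\<lambda>q. M \<le> real q) (quot_seq b (a mod b)))"
        using qsa by simp
      also have "\<dots> \<le> card (Good n d M \<inter> {nat \<bar>y1\<bar>..n})" using IH card_mono[OF fin sub] by linarith
      finally show ?thesis .
    next
      case True
      define Y where "Y = nat \<bar>y1\<bar>"
      have Yi: "int Y = \<bar>y1\<bar>" unfolding Y_def by simp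
      have b1: "1 \<le> b" using \<open>b \<noteq> 0\<close> by simp
      have p1: "\<bar>y1\<bar> * int a \<le> int n"
      proof -
        have "\<bar>y0\<bar> * int b \<ge> 0" by simp
        then show ?thesis using "1.prems"(2) by linarith
      qed
      have "int a \<le> \<bar>y1\<bar> * int a" using "1.prems"(5) by (simp add: mult_le_cancel_right1)
      then have a1: "int a \<le> int n" using p1 by linarith
      have bn: "b < n" using a1 "1.prems"(1) by simp
      have Yn: "Y \<le> n"
      proof -
        note p1
        moreover have "\<bar>y1\<bar> \<le> \<bar>y1\<bar> * int a" using "1.prems"(1) by (simp add: mult_le_cancel_left1)
        ultimately show ?thesis using Yi by linarith
      qed
      have Yan: "real Y * real a \<le> real n"
      proof -
        have "int (Y * a) \<le> int n" using Yi p1 by simp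
        then have "Y * a \<le> n" by linarith
        then show ?thesis by (metis of_nat_le_iff of_nat_mult)
      qed
      have Mba: "M * real b \<le> real a"
      proof -
        have "a div b * b + a mod b = a" by (rule div_mult_mod_eq)
        then have "q * b \<le> a" unfolding q_def by linarith
        then have "real q * real b \<le> real a" by (metis of_nat_le_iff of_nat_mult)
        moreover have "M * real b \<le> real q * real b" using True by (simp add: mult_right_mono)
        ultimately show ?thesis by linarith
      qed
      have bMY: "real b * M * real Y \<le> real n"
      proof -
        have "real b * M * real Y = real Y * (M * real b)" by simp
        also have "\<dots> \<le> real Y * real a" using Mba by (simp add: mult_left_mono)
        finally show ?thesis using Yan by linarith
      qed
      have cong: "Y*d mod n = b \<or> Y*d mod n = n - b"
      proof (cases "y1 \<ge> 0")
        case True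
        then have "y1 = int Y" using Yi by simp
        then have "int n dvd int b - int (Y*d)" using "1.prems"(7) by simp
        then have "int b mod int n = int (Y*d) mod int n" by (simp add: mod_eq_dvd_iff)
        then have "int (b mod n) = int ((Y*d) mod n)" by (simp add: zmod_int)
        then have "b mod n = (Y*d) mod n" by simp
        then show ?thesis using bn by simp
      next
        case False
        then have "y1 = - int Y" using Yi by simp
        then have "int n dvd int b + int (Y*d)" using "1.prems"(7) by simp
        then have "int n dvd int (Y*d) - (- int b)" by (simp add: add.commute)
        then have "(int (Y*d)) mod int n = (- int b) mod int n" by (simp add: mod_eq_dvd_iff)
        also have "\<dots> = int n - int b" using bn b1 by (simp add: zmod_zminus1_eq_if)
        finally have "int ((Y*d) mod n) = int (n - b)" using bn by (simp add: zmod_int of_nat_diff)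
        then show ?thesis by simp
      qed
      have YG: "Y \<in> Good n d M"
        unfolding Good_def using Yn "1.prems"(5) Yi b1 bn bMY cong by auto
      have "Good n d M \<inter> {nat \<bar>y1\<bar>..n} \<supseteq> insert Y (Good n d M \<inter> {nat \<bar>y2\<bar>..n})"
        using YG Yn sub Y_def by auto
      moreover have "Y \<notin> Good n d M \<inter> {nat \<bar>y2\<bar>..n}" using Ylt Y_def by auto
      ultimately have "card (Good n d M \<inter> {nat \<bar>y1\<bar>..n}) \<ge> Suc (card (Good n d M \<inter> {nat \<bar>y2\<bar>..n}))"
      proof -
        assume s1: "insert Y (Good n d M \<inter> {nat \<bar>y2\<bar>..n}) \<subseteq> Good n d M \<inter> {nat \<bar>y1\<bar>..n}"
          and s2: "Y \<notin> Good n d M \<inter> {nat \<bar>y2\<bar>..n}"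
        have "card (insert Y (Good n d M \<inter> {nat \<bar>y2\<bar>..n})) = Suc (card (Good n d M \<inter> {nat \<bar>y2\<bar>..n}))"
          using s2 by (simp add: card_insert_disjoint)
        moreover have "card (insert Y (Good n d M \<inter> {nat \<bar>y2\<bar>..n})) \<le> card (Good n d M \<inter> {nat \<bar>y1\<bar>..n})"
          by (rule card_mono[OF fin s1])
        ultimately show ?thesis by simp
      qed
      moreover have "length (filter (\<lambda>q. M \<le> real q) (quot_seq a b)) = Suc (length (filter (\<lambda>q. M \<le> real q) (quot_seq b (a mod b))))"
        using qsa True by simp
      ultimately show ?thesis using IH by linarith
    qed
  qed
qed


lemma finite_Good[simp]: "finite (Good n d M)"
  by (rule finite_subset[of _ "{1..n}"]) (auto simp: Good_def)

lemma per_d: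
  fixes n d :: nat and M :: real
  assumes M1: "M \<ge> 1" and d: "1 \<le> d" "d < n"
  shows "length (filter (\<lambda>q. M \<le> real q) (quot_seq n d)) \<le> 2 * card (Good n d M)"
proof -
  have qs: "quot_seq n d = (n div d) # quot_seq d (n mod d)" using qsS d by simp
  have q1: "n div d \<ge> 1" using d by (simp add: div_greater_zero_iff Suc_le_eq)
  have nd: "n = n div d * d + n mod d" by simp
  have e1: "int n = \<bar>- int (n div d)\<bar> * int d + \<bar>1\<bar> * int (n mod d)"
  proof -
    have "int n = int (n div d * d + n mod d)" using nd by metis
    also have "\<dots> = int (n div d) * int d + int (n mod d)" by (simp only: of_nat_add of_nat_mult)
    finally show ?thesis by simp
  qed
  have e2: "int n dvd int (n mod d) - (- int (n div d)) * int d"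
  proof -
    have "int (n mod d) - (- int (n div d)) * int d = int n" using e1 by simp
    then show ?thesis by simp
  qed
  have L: "length (filter (\<lambda>q. M \<le> real q) (quot_seq d (n mod d))) \<le> card (Good n d M \<inter> {nat \<bar>- int (n div d)\<bar>..n})"
    by (rule euclid_main[OF M1 _ e1]) (use d q1 e2 in auto)
  also have "\<dots> \<le> card (Good n d M)" by (rule card_mono) auto
  finally have L2: "length (filter (\<lambda>q. M \<le> real q) (quot_seq d (n mod d))) \<le> card (Good n d M)" .
  show ?thesis
  proof (cases "M \<le> real (n div d)")
    case False
    then show ?thesis using qs L2 by simp
  next
    case True
    have "real d * M \<le> real d * real (n div d)" using True by (simp add: mult_left_mono)
    also have "\<dots> \<le> real n"
    proof -
      have "d * (n div d) \<le> n" by simp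
      then show ?thesis by (metis of_nat_le_iff of_nat_mult)
    qed
    finally have "real d * M * real (1::nat) \<le> real n" by simp
    then have "1 \<in> Good n d M" unfolding Good_def using d by auto
    then have "card (Good n d M) \<ge> 1" using card_0_eq[of "Good n d M"] by fastforce
    then show ?thesis using qs L2 True by simp
  qed
qed


lemma sum_count_list: "finite S \<Longrightarrow> (\<Sum>m\<in>S. count_list xs m) = length (filter (\<lambda>x. x \<in> S) xs)"
proof (induction xs)
  case Nil then show ?case by simp
next
  case (Cons x xs)
  have "(\<Sum>m\<in>S. count_list (x # xs) m) = (\<Sum>m\<in>S. (if x = m then 1 else 0) + count_list xs m)"
    by (intro sum.cong) auto
  also have "\<dots> = (\<Sum>m\<in>S. (if x = m then 1 else 0)) + (\<Sum>m\<in>S. count_list xs m)"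
    by (rule sum.distrib)
  also have "(\<Sum>m\<in>S. (if x = m then 1 else 0)) = (if x \<in> S then 1 else 0)"
    using Cons.prems by (simp add: sum.delta)
  finally show ?case using Cons by simp
qed

lemma filter_mono_len: "(\<And>x. P x \<Longrightarrow> Q x) \<Longrightarrow> length (filter P xs) \<le> length (filter Q xs)"
  by (induction xs) auto

lemma card_as_sum: "finite A \<Longrightarrow> card {x\<in>A. P x} = (\<Sum>x\<in>A. if P x then 1 else 0)"
  by (simp add: sum.If_cases Int_def conj_commute)

lemma ln2_ge: "ln (2::real) \<ge> 1/2"
proof -
  have "exp (1/2::real) * exp (1/2) = exp 1" by (simp flip: exp_add)
  also have "\<dots> \<le> 3" by (rule exp_le)
  finally have h: "exp (1/2::real) * exp (1/2) \<le> 3" .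
  have "exp (1/2::real) \<le> 2"
  proof (rule ccontr)
    assume "\<not> exp (1/2::real) \<le> 2"
    then have "exp (1/2::real) > 2" by simp
    then have "exp (1/2::real) * exp (1/2) > 2 * 2" by (intro mult_strict_mono) auto
    then show False using h by simp
  qed
  then show ?thesis using ln_ge_iff[of 2 "1/2"] by simp
qed

theorem lemma5p1:
  fixes K :: real
  assumes "K > 0"
  shows "\<exists>C::real. \<forall>(n::nat) (M::real). n \<ge> 2 \<longrightarrow> 1 \<le> M \<longrightarrow> M \<le> K * (ln (real n))^2 \<longrightarrow>
           real (\<Sum>m\<in>{m::nat. M \<le> real m \<and> m \<le> n}. r n m) \<le> C * real n * ln (real n) / M"
proof (intro exI allI impI)
  fix n :: nat and M :: real
  assume n2: "n \<ge> 2" and M1: "1 \<le> M" and "M \<le> K * (ln (real n))^2"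
  define S where "S = {m::nat. M \<le> real m \<and> m \<le> n}"
  define D where "D = {d. 1 \<le> d \<and> d \<le> n - 1 \<and> coprime n d}"
  define L where "L = (\<lambda>d. length (filter (\<lambda>q. M \<le> real q) (quot_seq n d)))"
  have finS: "finite S" unfolding S_def by (rule finite_subset[of _ "{..n}"]) auto
  have finD: "finite D" unfolding D_def by (rule finite_subset[of _ "{..n}"]) auto
  have DS: "D \<subseteq> {1..n-1}" unfolding D_def by auto
  have "(\<Sum>m\<in>S. r n m) = (\<Sum>m\<in>S. \<Sum>d\<in>D. count_list (quot_seq n d) m)"
    unfolding r_def D_def by simp
  also have "\<dots> = (\<Sum>d\<in>D. \<Sum>m\<in>S. count_list (quot_seq n d) m)" by (rule sum.swap)
  also have "\<dots> = (\<Sum>d\<in>D. length (filter (\<lambda>x. x \<in> S) (quot_seq n d)))"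
    using finS by (simp add: sum_count_list)
  also have "\<dots> \<le> (\<Sum>d\<in>D. L d)"
    unfolding L_def by (intro sum_mono filter_mono_len) (auto simp: S_def)
  also have "\<dots> \<le> (\<Sum>d\<in>{1..n-1}. L d)" by (rule sum_mono2[OF _ DS]) auto
  also have "\<dots> \<le> (\<Sum>d\<in>{1..n-1}. 2 * card (Good n d M))"
    unfolding L_def by (intro sum_mono per_d M1) auto
  also have "\<dots> = 2 * (\<Sum>d\<in>{1..n-1}. card (Good n d M))" by (simp add: sum_distrib_left)
  also have "(\<Sum>d\<in>{1..n-1}. card (Good n d M)) = (\<Sum>d\<in>{1..n-1}. \<Sum>Y\<in>{1..n}. if Y \<in> Good n d M then 1 else 0)"
  proof (intro sum.cong refl)
    fix d
    have "Good n d M = {Y\<in>{1..n}. Y \<in> Good n d M}" by (auto simp: Good_def)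
    then show "card (Good n d M) = (\<Sum>Y\<in>{1..n}. if Y \<in> Good n d M then 1 else 0)"
      using card_as_sum[of "{1..n}" "\<lambda>Y. Y \<in> Good n d M"] by simp
  qed
  also have "\<dots> = (\<Sum>Y\<in>{1..n}. \<Sum>d\<in>{1..n-1}. if Y \<in> Good n d M then 1 else 0)" by (rule sum.swap)
  also have "\<dots> = (\<Sum>Y\<in>{1..n}. card {d\<in>{1..n-1}. Y \<in> Good n d M})"
  proof (intro sum.cong refl)
    fix Y show "(\<Sum>d\<in>{1..n-1}. if Y \<in> Good n d M then 1 else 0) = card {d\<in>{1..n-1}. Y \<in> Good n d M}"
      using card_as_sum[of "{1..n-1}" "\<lambda>d. Y \<in> Good n d M"] by simp
  qed
  finally have A: "(\<Sum>m\<in>S. r n m) \<le> 2 * (\<Sum>Y\<in>{1..n}. card {d\<in>{1..n-1}. Y \<in> Good n d M})" .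
  have B: "real (\<Sum>Y\<in>{1..n}. card {d\<in>{1..n-1}. Y \<in> Good n d M}) \<le> (\<Sum>Y\<in>{1..n}. 2 * real n / (M * real Y))"
    unfolding of_nat_sum by (intro sum_mono card_fixed_Y) (use n2 M1 in auto)
  also have "\<dots> = 2 * real n / M * harm n"
    unfolding harm_def by (simp add: sum_distrib_left field_simps)
  also have "\<dots> \<le> 2 * real n / M * (ln (real n) + 1)"
  proof -
    have "harm n - ln (real n) \<le> harm 1 - ln (real (1::nat))"
      by (rule euler_mascheroni_sequence_decreasing) (use n2 in auto)
    then have "harm n \<le> ln (real n) + (1::real)" by (simp add: harm_def)
    moreover have "2 * real n / M \<ge> 0" using M1 by simp
    ultimately show ?thesis by (rule mult_left_mono)
  qed
  also have "\<dots> \<le> 2 * real n / M * (3 * ln (real n))"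
  proof -
    have "ln (real n) \<ge> ln 2" using n2 by simp
    then have "ln (real n) + 1 \<le> 3 * ln (real n)" using ln2_ge by linarith
    moreover have "2 * real n / M \<ge> 0" using M1 by simp
    ultimately show ?thesis by (rule mult_left_mono)
  qed
  finally have B2: "real (\<Sum>Y\<in>{1..n}. card {d\<in>{1..n-1}. Y \<in> Good n d M}) \<le> 6 * real n * ln (real n) / M"
    by simp
  have "real (\<Sum>m\<in>S. r n m) \<le> 2 * real (\<Sum>Y\<in>{1..n}. card {d\<in>{1..n-1}. Y \<in> Good n d M})"
  proof -
    have "real (\<Sum>m\<in>S. r n m) \<le> real (2 * (\<Sum>Y\<in>{1..n}. card {d\<in>{1..n-1}. Y \<in> Good n d M}))"
      using A by (simp only: of_nat_le_iff)
    then show ?thesis by simp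
  qed
  also have "\<dots> \<le> 12 * real n * ln (real n) / M" using B2 by simp
  finally show "real (\<Sum>m\<in>{m::nat. M \<le> real m \<and> m \<le> n}. r n m) \<le> 12 * real n * ln (real n) / M"
    unfolding S_def .
qed

end
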